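(* If $(B,\beta_1,\ldots,\beta_B)$ is a feasible solution of problem (RO-$\Sigma$), then for all contests $c<c'$ with $c\equiv c'$, either $c\prec_{\beta_1\cdots\beta_B}c'$ or $c'\prec_{\beta_1\cdots\beta_B}c$.
   Context: A ballot style consists of contests $\mathcal{C}=\{1,\ldots,C\}$, candidates $\mathcal{N}=\{1,\ldots,N\}$ partitioned into nonempty sets $\mathcal{N}_c$ ($c\in\mathcal{C}$), and positive integers $v_c$. A filled-out ballot is a subset $\beta\subseteq\mathcal{N}$; $\mathscr{B}=\{\beta\subseteq\mathcal{N}: |\mathcal{N}_c\cap\beta|\le v_c\ \forall c\}$. For $i\in\mathcal{N}_c$: $T^*_i(\beta_1,\ldots,\beta_B)=\sum_{b=1}^B\mathbb{I}\{i\in\beta_b\text{ and }|\mathcal{N}_c\cap\beta_b|\le v_c\}$, and for a bijection $\sigma$ of $\mathcal{N}$, $T^\sigma_i(\beta_1,\ldots,\beta_B)=\sum_{b=1}^B\mathbb{I}\{\sigma(i)\in\beta_b\text{ and }|\{\sigma(j)\in\beta_b: j\in\mathcal{N}_c\}|\le v_c\}$. $\Sigma$ is the set of non-identity bijections $\mathcal{N}\to\mathcal{N}$. Problem (RO-$\Sigma$): minimize $B$ over $B\in\mathbb{N}$ and $\beta_1,\ldots,\beta_B\in\mathscr{B}$ subject to $T^\sigma(\beta_1,\ldots,\beta_B)\neq T^*(\beta_1,\ldots,\beta_B)$ for all $\sigma\in\Sigma$. Two contests $c,c'$ are equivalent, $c\equiv c'$, iff $|\mathcal{N}_c|=|\mathcal{N}_{c'}|$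 and $v_c=v_{c'}$. $\mathcal{N}_c^k$ denotes the candidate with the $k$-th smallest index in $\mathcal{N}_c$ ($k=1,\ldots,|\mathcal{N}_c|$). Write $n_b(i)=|\{b\in\{1,\ldots,B\}: i\in\beta_b\}|$. We write $c\prec_{\beta_1\cdots\beta_B}c'$ iff $c\equiv c'$ and there exists $k\in\{1,\ldots,|\mathcal{N}_c|\}$ with $n(\mathcal{N}_c^{m})=n(\mathcal{N}_{c'}^{m})$ for all $m\in\{k+1,\ldots,|\mathcal{N}_c|\}$ and $n(\mathcal{N}_c^{k})<n(\mathcal{N}_{c'}^{k})$, where $n(i)=|\{b\in\{1,\ldots,B\}: i\in\beta_b\}|$. *)

theory Defs
  imports Main
begin

text \<open>Ballot style: candidates {1..N}, contests {1..C}; con i is the contest of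
candidate i (this encodes the partition of candidates into the sets N_c);
v c is the number of allowed votes in contest c. Ballots beta_1..beta_B are
represented as a list bs with B = length bs, beta_b = bs ! (b-1).\<close>

definition cands :: "nat \<Rightarrow> (nat \<Rightarrow> nat) \<Rightarrow> nat \<Rightarrow> nat set" where
  "cands N con c = {i \<in> {1..N}. con i = c}"

definition ballot_style :: "nat \<Rightarrow> nat \<Rightarrow> (nat \<Rightarrow> nat) \<Rightarrow> (nat \<Rightarrow> nat) \<Rightarrow> bool" where
  "ballot_style N C con v \<longleftrightarrow>
     (\<forall>i\<in>{1..N}. con i \<in> {1..C}) \<and>
     (\<forall>c\<in>{1..C}. cands N con c \<noteq> {}) \<and>
     (\<forall>c\<in>{1..C}. 0 < v c)"

definition valid_ballot :: "nat \<Rightarrow> nat \<Rightarrow> (nat \<Rightarrow> nat) \<Rightarrow> (nat \<Rightarrow> nat) \<Rightarrow> nat set \<Rightarrow> bool" where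
  "valid_ballot N C con v \<beta> \<longleftrightarrow>
     \<beta> \<subseteq> {1..N} \<and> (\<forall>c\<in>{1..C}. card (cands N con c \<inter> \<beta>) \<le> v c)"

definition Tstar :: "nat \<Rightarrow> (nat \<Rightarrow> nat) \<Rightarrow> (nat \<Rightarrow> nat) \<Rightarrow> nat set list \<Rightarrow> nat \<Rightarrow> nat" where
  "Tstar N con v bs i = card {b. b < length bs \<and> i \<in> bs ! b \<and>
       card (cands N con (con i) \<inter> bs ! b) \<le> v (con i)}"

definition Tsig :: "nat \<Rightarrow> (nat \<Rightarrow> nat) \<Rightarrow> (nat \<Rightarrow> nat) \<Rightarrow> nat set list \<Rightarrow> (nat \<Rightarrow> nat) \<Rightarrow> nat \<Rightarrow> nat" where
  "Tsig N con v bs \<sigma> i = card {b. b < length bs \<and> \<sigma> i \<in> bs ! b \<and>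
       card {\<sigma> j | j. j \<in> cands N con (con i) \<and> \<sigma> j \<in> bs ! b} \<le> v (con i)}"

definition feasible :: "nat \<Rightarrow> nat \<Rightarrow> (nat \<Rightarrow> nat) \<Rightarrow> (nat \<Rightarrow> nat) \<Rightarrow> nat set list \<Rightarrow> bool" where
  "feasible N C con v bs \<longleftrightarrow>
     (\<forall>\<beta>\<in>set bs. valid_ballot N C con v \<beta>) \<and>
     (\<forall>\<sigma>. bij_betw \<sigma> {1..N} {1..N} \<and> (\<exists>i\<in>{1..N}. \<sigma> i \<noteq> i) \<longrightarrow>
        (\<exists>i\<in>{1..N}. Tsig N con v bs \<sigma> i \<noteq> Tstar N con v bs i))"

definition contest_equiv :: "nat \<Rightarrow> (nat \<Rightarrow> nat) \<Rightarrow> (nat \<Rightarrow> nat) \<Rightarrow> nat \<Rightarrow> nat \<Rightarrow> bool" where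
  "contest_equiv N con v c c' \<longleftrightarrow>
     card (cands N con c) = card (cands N con c') \<and> v c = v c'"

definition kth_cand :: "nat \<Rightarrow> (nat \<Rightarrow> nat) \<Rightarrow> nat \<Rightarrow> nat \<Rightarrow> nat" where
  "kth_cand N con c k = sorted_list_of_set (cands N con c) ! (k - 1)"

definition nb :: "nat set list \<Rightarrow> nat \<Rightarrow> nat" where
  "nb bs i = card {b. b < length bs \<and> i \<in> bs ! b}"

definition contest_prec :: "nat \<Rightarrow> (nat \<Rightarrow> nat) \<Rightarrow> (nat \<Rightarrow> nat) \<Rightarrow> nat set list \<Rightarrow> nat \<Rightarrow> nat \<Rightarrow> bool" where
  "contest_prec N con v bs c c' \<longleftrightarrow>
     contest_equiv N con v c c' \<and>
     (\<exists>k\<in>{1..card (cands N con c)}.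
        (\<forall>m\<in>{k+1..card (cands N con c)}.
            nb bs (kth_cand N con c m) = nb bs (kth_cand N con c' m)) \<and>
        nb bs (kth_cand N con c k) < nb bs (kth_cand N con c' k))"

end

theory Submission
  imports Defs
begin

lemma the_idx:
  assumes "distinct L" "p < length L"
  shows "(THE q. q < length L \<and> L!q = L!p) = p"
  using assms by (intro the_equality) (auto simp: nth_eq_iff_index_eq)

lemma cands_fin: "finite (cands N con c)"
  unfolding cands_def by auto

lemma Tsig_nb:
  assumes valid: "\<forall>\<beta>\<in>set bs. valid_ballot N C con v \<beta>"
    and img: "\<sigma> ` cands N con (con i) = cands N con d"
    and d: "d \<in> {1..C}" and vd: "v d = v (con i)"
  shows "Tsig N con v bs \<sigma> i = nb bs (\<sigma> i)"
proof -
  have *: "card {\<sigma> j | j. j \<in> cands N con (con i) \<and> \<sigma> j \<in> bs ! b} \<le> v (con i)"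
    if b: "b < length bs" for b
  proof -
    have "{\<sigma> j | j. j \<in> cands N con (con i) \<and> \<sigma> j \<in> bs ! b} = \<sigma> ` cands N con (con i) \<inter> bs ! b"
      by auto
    also have "\<dots> = cands N con d \<inter> bs ! b" by (simp only: img)
    finally have eq: "{\<sigma> j | j. j \<in> cands N con (con i) \<and> \<sigma> j \<in> bs ! b} = cands N con d \<inter> bs ! b" .
    have "bs ! b \<in> set bs" using b by simp
    then have "valid_ballot N C con v (bs ! b)" using valid by blast
    then have "card (cands N con d \<inter> bs ! b) \<le> v d" using d unfolding valid_ballot_def by blast
    then show ?thesis using eq vd by simp
  qed
  have "{b. b < length bs \<and> \<sigma> i \<in> bs ! b \<and>
       card {\<sigma> j | j. j \<in> cands N con (con i) \<and> \<sigma> j \<in> bs ! b} \<le> v (con i)}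
     = {b. b < length bs \<and> \<sigma> i \<in> bs ! b}" using * by blast
  then show ?thesis unfolding Tsig_def nb_def by simp
qed

lemma Tstar_nb:
  assumes valid: "\<forall>\<beta>\<in>set bs. valid_ballot N C con v \<beta>"
    and d: "con i \<in> {1..C}"
  shows "Tstar N con v bs i = nb bs i"
proof -
  have *: "card (cands N con (con i) \<inter> bs ! b) \<le> v (con i)" if b: "b < length bs" for b
  proof -
    have "bs ! b \<in> set bs" using b by simp
    then have "valid_ballot N C con v (bs ! b)" using valid by blast
    then show ?thesis using d unfolding valid_ballot_def by blast
  qed
  have "{b. b < length bs \<and> i \<in> bs ! b \<and> card (cands N con (con i) \<inter> bs ! b) \<le> v (con i)}
     = {b. b < length bs \<and> i \<in> bs ! b}" using * by blast
  then show ?thesis unfolding Tstar_def nb_def by simp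
qed

theorem lemma3:
  fixes N C :: nat and con v :: "nat \<Rightarrow> nat" and bs :: "nat set list" and c c' :: nat
  assumes "ballot_style N C con v"
    and "feasible N C con v bs"
    and "c \<in> {1..C}" and "c' \<in> {1..C}" and "c < c'"
    and "contest_equiv N con v c c'"
  shows "contest_prec N con v bs c c' \<or> contest_prec N con v bs c' c"
proof -
  note bs = assms(1)[unfolded ballot_style_def]
  note fe = assms(2)[unfolded feasible_def]
  have valid: "\<forall>\<beta>\<in>set bs. valid_ballot N C con v \<beta>" using fe by (rule conjunct1)
  have feas: "\<And>\<sigma>. bij_betw \<sigma> {1..N} {1..N} \<Longrightarrow> (\<exists>i\<in>{1..N}. \<sigma> i \<noteq> i) \<Longrightarrow>
        (\<exists>i\<in>{1..N}. Tsig N con v bs \<sigma> i \<noteq> Tstar N con v bs i)"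
  proof -
    fix \<sigma> :: "nat \<Rightarrow> nat"
    assume a: "bij_betw \<sigma> {1..N} {1..N}" and b: "\<exists>i\<in>{1..N}. \<sigma> i \<noteq> i"
    from conjunct2[OF fe] have "bij_betw \<sigma> {1..N} {1..N} \<and> (\<exists>i\<in>{1..N}. \<sigma> i \<noteq> i) \<longrightarrow>
        (\<exists>i\<in>{1..N}. Tsig N con v bs \<sigma> i \<noteq> Tstar N con v bs i)" by (rule spec)
    from this conjI[OF a b] show "\<exists>i\<in>{1..N}. Tsig N con v bs \<sigma> i \<noteq> Tstar N con v bs i" by (rule mp)
  qed
  define A where "A = cands N con c"
  define A' where "A' = cands N con c'"
  define L where "L = sorted_list_of_set A"
  define L' where "L' = sorted_list_of_set A'"
  define n where "n = card A"
  have eqv: "card A' = n" "v c = v c'" using assms(6) unfolding contest_equiv_def A_def A'_def n_def by auto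
  have fA: "finite A" "finite A'" unfolding A_def A'_def by (auto simp: cands_fin)
  have L: "distinct L" "set L = A" "length L = n" using fA unfolding L_def n_def by auto
  have L': "distinct L'" "set L' = A'" "length L' = n" using fA eqv unfolding L'_def by auto
  have disj: "A \<inter> A' = {}" using assms(5) unfolding A_def A'_def cands_def by auto
  have kth: "\<And>k. kth_cand N con c k = L ! (k-1)" "\<And>k. kth_cand N con c' k = L' ! (k-1)"
    unfolding kth_cand_def L_def L'_def A_def A'_def by auto
  have cardc: "card (cands N con c) = n" "card (cands N con c') = n"
    using eqv unfolding n_def A_def A'_def by auto
  show ?thesis
  proof (cases "\<exists>k\<in>{1..n}. nb bs (L!(k-1)) \<noteq> nb bs (L'!(k-1))")
    case True
    define S where "S = {k\<in>{1..n}. nb bs (L!(k-1)) \<noteq> nb bs (L'!(k-1))}"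
    define k where "k = Max S"
    have Sne: "S \<noteq> {}" using True unfolding S_def by blast
    have Sfin: "finite S" unfolding S_def by simp
    have k: "k \<in> S" "\<And>m. m \<in> S \<Longrightarrow> m \<le> k"
      unfolding k_def using Max_in[OF Sfin Sne] Max_ge[OF Sfin] by auto
    have rest: "\<forall>m\<in>{k+1..n}. nb bs (L!(m-1)) = nb bs (L'!(m-1))"
    proof
      fix m assume m: "m \<in> {k+1..n}"
      show "nb bs (L!(m-1)) = nb bs (L'!(m-1))"
      proof (rule ccontr)
        assume "\<not> ?thesis"
        moreover have "m \<in> {1..n}" using m by simp
        ultimately have "m \<in> S" unfolding S_def by blast
        then have "m \<le> k" by (rule k(2))
        then show False using m by simp
      qed
    qed
    have kn: "k \<in> {1..n}" using k(1) unfolding S_def by auto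
    have ne: "nb bs (L!(k-1)) \<noteq> nb bs (L'!(k-1))" using k(1) unfolding S_def by auto
    show ?thesis
    proof (cases "nb bs (L!(k-1)) < nb bs (L'!(k-1))")
      case True
      have "contest_prec N con v bs c c'"
        unfolding contest_prec_def cardc
      proof (intro conjI bexI[of _ k] ballI)
        show "contest_equiv N con v c c'" by (rule assms(6))
        show "k \<in> {1..n}" by (rule kn)
        fix m assume "m \<in> {k+1..n}"
        then show "nb bs (kth_cand N con c m) = nb bs (kth_cand N con c' m)"
          using rest by (simp only: kth)
      next
        show "nb bs (kth_cand N con c k) < nb bs (kth_cand N con c' k)"
          using True by (simp only: kth)
      qed
      then show ?thesis by simp
    next
      case False
      then have lt: "nb bs (L'!(k-1)) < nb bs (L!(k-1))" using ne by simp
      have "contest_equiv N con v c' c" using assms(6) unfolding contest_equiv_def by auto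
      then have "contest_prec N con v bs c' c"
        unfolding contest_prec_def cardc
      proof (intro conjI bexI[of _ k] ballI)
        show "k \<in> {1..n}" by (rule kn)
        fix m assume "m \<in> {k+1..n}"
        then show "nb bs (kth_cand N con c' m) = nb bs (kth_cand N con c m)"
          using rest by (simp only: kth)
      next
        show "nb bs (kth_cand N con c' k) < nb bs (kth_cand N con c k)"
          using lt by (simp only: kth)
      qed
      then show ?thesis by simp
    qed
  next
    case False
    then have alleq: "\<And>p. p < n \<Longrightarrow> nb bs (L!p) = nb bs (L'!p)"
    proof -
      fix p assume "p < n"
      then have "Suc p \<in> {1..n}" by auto
      moreover have "\<forall>k\<in>{1..n}. nb bs (L!(k-1)) = nb bs (L'!(k-1))" using False by blast
      ultimately have "nb bs (L!(Suc p - 1)) = nb bs (L'!(Suc p - 1))" by blast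
      then show "nb bs (L!p) = nb bs (L'!p)" by simp
    qed
    define \<sigma> where "\<sigma> i = (if i \<in> A then L' ! (THE q. q < n \<and> L!q = i)
       else if i \<in> A' then L ! (THE q. q < n \<and> L'!q = i) else i)" for i
    have s1: "\<sigma> (L!p) = L'!p" if "p < n" for p
      using that L the_idx[of L p] unfolding \<sigma>_def by (auto simp: nth_mem)
    have s2: "\<sigma> (L'!p) = L!p" if "p < n" for p
    proof -
      have "L'!p \<notin> A" using disj L' that nth_mem by fastforce
      then show ?thesis using that L' the_idx[of L' p] unfolding \<sigma>_def by (auto simp: nth_mem)
    qed
    have s3: "\<sigma> i = i" if "i \<notin> A" "i \<notin> A'" for i using that unfolding \<sigma>_def by auto
    have inA: "\<exists>p<n. i = L!p" if "i \<in> A" for i using that L by (metis in_set_conv_nth)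
    have inA': "\<exists>p<n. i = L'!p" if "i \<in> A'" for i using that L' by (metis in_set_conv_nth)
    have sub: "A \<subseteq> {1..N}" "A' \<subseteq> {1..N}" unfolding A_def A'_def cands_def by auto
    have invol: "\<sigma> (\<sigma> i) = i" for i
    proof (cases "i \<in> A")
      case True
      then obtain p where "p < n" "i = L!p" using inA by blast
      then show ?thesis using s1 s2 by simp
    next
      case F: False
      show ?thesis
      proof (cases "i \<in> A'")
        case True
        then obtain p where "p < n" "i = L'!p" using inA' by blast
        then show ?thesis using s1 s2 by simp
      qed (use F s3 in simp)
    qed
    have into: "\<sigma> i \<in> {1..N}" if "i \<in> {1..N}" for i
    proof -
      have "\<sigma> i \<in> A \<or> \<sigma> i \<in> A' \<or> \<sigma> i = i"
      proof (cases "i \<in> A")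
        case True
        then obtain p where "p < n" "i = L!p" using inA by blast
        then show ?thesis using s1 L' by auto
      next
        case F: False
        show ?thesis
        proof (cases "i \<in> A'")
          case True
          then obtain p where "p < n" "i = L'!p" using inA' by blast
          then show ?thesis using s2 L by auto
        qed (use F s3 in simp)
      qed
      then show ?thesis using that sub by auto
    qed
    have bij: "bij_betw \<sigma> {1..N} {1..N}"
      by (rule bij_betw_byWitness[where f'=\<sigma>]) (use invol into in auto)
    have "A \<noteq> {}" using bs assms(3) unfolding A_def by blast
    then have n0: "n > 0" using fA(1) unfolding n_def by (simp add: card_gt_0_iff)
    have l0: "L!0 \<in> A" using n0 L nth_mem by metis
    have l0': "L'!0 \<in> A'" using n0 L' nth_mem by metis
    have nid: "\<sigma> (L!0) \<noteq> L!0" "L!0 \<in> {1..N}"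
      using s1[OF n0] l0 l0' disj sub by auto
    obtain i where i: "i \<in> {1..N}" "Tsig N con v bs \<sigma> i \<noteq> Tstar N con v bs i"
      using feas[OF bij] nid by blast
    have ci: "con i \<in> {1..C}" using bs i(1) by auto
    have ts: "Tstar N con v bs i = nb bs i" using Tstar_nb[OF valid ci] .
    have imgA: "\<sigma> ` A = A'"
    proof
      show "\<sigma> ` A \<subseteq> A'" using inA s1 L' nth_mem by fastforce
      show "A' \<subseteq> \<sigma> ` A"
      proof
        fix x assume "x \<in> A'"
        then obtain p where "p < n" "x = L'!p" using inA' by blast
        then show "x \<in> \<sigma> ` A" using s1 L nth_mem by (metis image_eqI)
      qed
    qed
    have imgA': "\<sigma> ` A' = A" 
    proof -
      have "\<sigma> ` A' = \<sigma> ` \<sigma> ` A" using imgA by simp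
      also have "\<dots> = A" by (simp add: image_image invol)
      finally show ?thesis .
    qed
    show ?thesis
    proof (cases "i \<in> A")
      case True
      then have "con i = c" unfolding A_def cands_def by auto
      then have "Tsig N con v bs \<sigma> i = nb bs (\<sigma> i)"
        using Tsig_nb[OF valid, of \<sigma> i c'] imgA assms(4) eqv
        unfolding A_def A'_def by simp
      moreover obtain p where "p < n" "i = L!p" using inA True by blast
      ultimately show ?thesis using i ts s1 alleq by auto
    next
      case F1: False
      show ?thesis
      proof (cases "i \<in> A'")
        case True
        then have "con i = c'" unfolding A'_def cands_def by auto
        then have "Tsig N con v bs \<sigma> i = nb bs (\<sigma> i)"
          using Tsig_nb[OF valid, of \<sigma> i c] imgA' assms(3) eqv
          unfolding A_def A'_def by simp
        moreover obtain p where "p < n" "i = L'!p" using inA' True by blast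
        ultimately show ?thesis using i ts s2 alleq by auto
      next
        case False
        have "con i \<noteq> c" "con i \<noteq> c'" using F1 False i(1) unfolding A_def A'_def cands_def by auto
        then have "\<sigma> ` cands N con (con i) = cands N con (con i)"
          using s3 unfolding A_def A'_def cands_def by (auto simp: image_iff)
        then have "Tsig N con v bs \<sigma> i = nb bs (\<sigma> i)"
          using Tsig_nb[OF valid, of \<sigma> i "con i"] ci by simp
        then show ?thesis using i ts s3 F1 False by auto
      qed
    qed
  qed
qed

end
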